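(* Let $\mathcal{G}=(\mathcal{V},\mathcal{E})$ be a directed graph and $f:2^{\mathcal{E}}\to\mathbb{R}_+$ a normalized, nonnegative, monotone nondecreasing submodular function, and define the node function $h:2^{\mathcal{V}}\to\mathbb{R}_+$ by $h(X)=f(\delta^+(X))$. Then: (1) $h$ is not always submodular, i.e., there exist such $\mathcal{G}$ and $f$ for which $h$ is not submodular; (2) $h$ is always subadditive: $h(A)+h(B)\ge h(A\cup B)$ for all $A,B\subseteq\mathcal{V}$.
   Context: For $X\subseteq\mathcal{V}$, $\delta^+(X)=\{(v,u)\in\mathcal{E}: v\in X,\ u\notin X\}$ is the set of edges leaving $X$. A set function $f$ is normalized if $f(\emptyset)=0$, monotone nondecreasing if $A\subseteq B$ implies $f(A)\le f(B)$, and submodular if $f(A)+f(B)\ge f(A\cup B)+f(A\cap B)$ for all $A,B$. *)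

theory Defs
  imports Main "HOL.Real"
begin

definition digraph :: "'v set \<Rightarrow> ('v \<times> 'v) set \<Rightarrow> bool" where
  "digraph V E \<longleftrightarrow> E \<subseteq> V \<times> V"

definition out_edges :: "('v \<times> 'v) set \<Rightarrow> 'v set \<Rightarrow> ('v \<times> 'v) set" where
  "out_edges E X = {(v, u) \<in> E. v \<in> X \<and> u \<notin> X}"

definition normalized_on :: "'a set \<Rightarrow> ('a set \<Rightarrow> real) \<Rightarrow> bool" where
  "normalized_on S f \<longleftrightarrow> f {} = 0"

definition nonneg_on :: "'a set \<Rightarrow> ('a set \<Rightarrow> real) \<Rightarrow> bool" where
  "nonneg_on S f \<longleftrightarrow> (\<forall>A. A \<subseteq> S \<longrightarrow> 0 \<le> f A)"

definition monotone_setfun_on :: "'a set \<Rightarrow> ('a set \<Rightarrow> real) \<Rightarrow> bool" where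
  "monotone_setfun_on S f \<longleftrightarrow> (\<forall>A B. A \<subseteq> B \<and> B \<subseteq> S \<longrightarrow> f A \<le> f B)"

definition submodular_on :: "'a set \<Rightarrow> ('a set \<Rightarrow> real) \<Rightarrow> bool" where
  "submodular_on S f \<longleftrightarrow>
     (\<forall>A B. A \<subseteq> S \<and> B \<subseteq> S \<longrightarrow> f A + f B \<ge> f (A \<union> B) + f (A \<inter> B))"

definition node_fun :: "('v \<times> 'v) set \<Rightarrow> (('v \<times> 'v) set \<Rightarrow> real) \<Rightarrow> 'v set \<Rightarrow> real" where
  "node_fun E f X = f (out_edges E X)"

end

theory Submission
  imports Defs
begin

lemma part1: "\<exists>(V :: nat set) E f. finite V \<and> digraph V E \<and>
            normalized_on E f \<and> nonneg_on E f \<and> monotone_setfun_on E f \<and> submodular_on E f \<and>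
            \<not> submodular_on V (node_fun E f)"
proof -
  let ?V = "{0,1,2,3::nat}"
  let ?E = "{(0,1),(2,3)} :: (nat \<times> nat) set"
  let ?f = "\<lambda>S::(nat\<times>nat) set. if S = {} then 0 else (1::real)"
  have "out_edges ?E {0,1} = {}" by (auto simp: out_edges_def)
  moreover have "out_edges ?E {0,2} = {(0,1),(2,3)}" by (auto simp: out_edges_def)
  moreover have "out_edges ?E ({0,1} \<union> {0,2}) = {(2,3)}" by (auto simp: out_edges_def)
  moreover have "out_edges ?E ({0,1} \<inter> {0,2}) = {(0,1)}" by (auto simp: out_edges_def)
  ultimately have "\<not> submodular_on ?V (node_fun ?E ?f)"
    unfolding submodular_on_def node_fun_def
    apply (simp only: not_all)
    apply (rule exI[of _ "{0,1}"], rule exI[of _ "{0,2}"])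
    by simp
  moreover have "digraph ?V ?E" by (auto simp: digraph_def)
  moreover have "submodular_on ?E ?f" by (auto simp: submodular_on_def)
  moreover have "monotone_setfun_on ?E ?f" by (auto simp: monotone_setfun_on_def)
  ultimately show ?thesis
    by (intro exI[of _ ?V] exI[of _ ?E] exI[of _ ?f])
       (auto simp: normalized_on_def nonneg_on_def)
qed

theorem proposition1:
  shows "(\<exists>(V :: nat set) E f. finite V \<and> digraph V E \<and>
            normalized_on E f \<and> nonneg_on E f \<and> monotone_setfun_on E f \<and> submodular_on E f \<and>
            \<not> submodular_on V (node_fun E f))
       \<and> (\<forall>(V :: 'v set) E f. digraph V E \<and>
            normalized_on E f \<and> nonneg_on E f \<and> monotone_setfun_on E f \<and> submodular_on E f \<longrightarrow>
            (\<forall>A B. A \<subseteq> V \<and> B \<subseteq> V \<longrightarrow>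
               node_fun E f A + node_fun E f B \<ge> node_fun E f (A \<union> B)))"
proof (intro conjI part1 allI impI)
  fix V :: "'v set" and E f A B
  assume h: "digraph V E \<and> normalized_on E f \<and> nonneg_on E f \<and> monotone_setfun_on E f \<and> submodular_on E f"
     and ab: "A \<subseteq> V \<and> B \<subseteq> V"
  let ?a = "out_edges E A" and ?b = "out_edges E B"
  have sa: "?a \<subseteq> E" "?b \<subseteq> E" by (auto simp: out_edges_def)
  have sub: "out_edges E (A \<union> B) \<subseteq> ?a \<union> ?b" by (auto simp: out_edges_def)
  have "f (out_edges E (A \<union> B)) \<le> f (?a \<union> ?b)"
    using h sub sa unfolding monotone_setfun_on_def by blast
  moreover have "f ?a + f ?b \<ge> f (?a \<union> ?b) + f (?a \<inter> ?b)"
    using h sa unfolding submodular_on_def by blast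
  moreover have "f (?a \<inter> ?b) \<ge> 0" using h sa unfolding nonneg_on_def by blast
  ultimately show "node_fun E f A + node_fun E f B \<ge> node_fun E f (A \<union> B)"
    unfolding node_fun_def by linarith
qed

end
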